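(* Let $\mathcal{X}\subseteq\mathbb{R}^d$ be closed and convex, let $h:\mathcal{X}\to\mathbb{R}$ be strictly convex and continuously differentiable, let $\mu>0$, and let $f:\mathcal{X}\to\mathbb{R}$ be continuously differentiable with a minimizer $x^\ast$ and $\mu$-uniformly convex with respect to $h$, i.e. $D_f(x,y)\ge\mu D_h(x,y)$ for all $x,y\in\mathcal{X}$. Let $\alpha,\beta:\mathbb{R}\to\mathbb{R}$ be smooth with $\beta$ nondecreasing and $\dot\beta_t\le e^{\alpha_t}$ for all $t$. Let $t\mapsto X_t\in\mathcal{X}$ be a differentiable curve such that $Z_t:=X_t+e^{-\alpha_t}\dot X_t\in\mathcal{X}$, $t\mapsto Z_t$ and $t\mapsto\nabla h(Z_t)$ are differentiable, and $$\frac{d}{dt}\nabla h(Z_t)=\dot\beta_t\nabla h(X_t)-\dot\beta_t\nabla h(Z_t)-\frac{e^{\alpha_t}}{\mu}\nabla f(X_t).$$ Then, for $x=x^\ast$, $$\frac{d}{dt}\Big\{e^{\beta_t}\mu D_h(x,Z_t)\Big\}\le-\frac{d}{dt}\Big\{e^{\beta_t}\big(f(X_t)-f(x)\big)\Big\};$$ if moreover $\dot\beta_t=e^{\alpha_t}$ for all $t$, the inequality holds for every $x\in\mathcal{X}$. Consequently $\mathcal{E}_t=e^{\beta_t}\big(\mu D_h(x,Z_t)+f(X_t)-f(x)\big)$ is nonincreasing in $t$ for $x=x^\ast$ (and for every $x\in\mathcal{X}$ when $\dot\beta_t=e^{\alpha_t}$).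
   Context: For a differentiable function $g$, $D_g(y,x)=g(y)-g(x)-\langle\nabla g(x),y-x\rangle$ denotes its Bregman divergence. *)

theory Defs
  imports "HOL-Analysis.Analysis"
begin

definition bregman :: "('a::real_inner \<Rightarrow> real) \<Rightarrow> ('a \<Rightarrow> 'a) \<Rightarrow> 'a \<Rightarrow> 'a \<Rightarrow> real" where
  "bregman g dg y x = g y - g x - inner (dg x) (y - x)"

definition strictly_convex_on :: "'a::real_vector set \<Rightarrow> ('a \<Rightarrow> real) \<Rightarrow> bool" where
  "strictly_convex_on S f \<longleftrightarrow> convex S \<and>
    (\<forall>x\<in>S. \<forall>y\<in>S. \<forall>t. x \<noteq> y \<and> 0 < t \<and> t < 1 \<longrightarrow>
       f ((1 - t) *\<^sub>R x + t *\<^sub>R y) < (1 - t) * f x + t * f y)"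

definition C1_gradient_on :: "'a::real_inner set \<Rightarrow> ('a \<Rightarrow> real) \<Rightarrow> ('a \<Rightarrow> 'a) \<Rightarrow> bool" where
  "C1_gradient_on S f df \<longleftrightarrow>
     (\<forall>x\<in>S. (f has_derivative (\<lambda>v. inner (df x) v)) (at x within S)) \<and> continuous_on S df"

definition smooth_real :: "(real \<Rightarrow> real) \<Rightarrow> bool" where
  "smooth_real g \<longleftrightarrow> (\<forall>n x. ((deriv ^^ n) g) differentiable (at x))"

end

theory Submission
  imports Defs
begin

lemma bregman_nonneg:
  assumes h: "strictly_convex_on S h" "C1_gradient_on S h gh"
    and y: "y \<in> S" and x: "x \<in> S"
  shows "bregman h gh y x \<ge> 0"
proof (cases "x = y")
  case True then show ?thesis by (simp add: bregman_def)
next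
  case False
  have cS: "convex S" using h(1) by (simp add: strictly_convex_on_def)
  define p where "p = (\<lambda>u::real. (1 - u) *\<^sub>R x + u *\<^sub>R y)"
  define g where "g = (\<lambda>u. h (p u))"
  have pS: "p ` {0..1} \<subseteq> S" using cS x y unfolding p_def
    by (auto simp: convex_alt)
  have p0: "p 0 = x" by (simp add: p_def)
  have dp: "(p has_derivative (\<lambda>u. u *\<^sub>R (y - x))) (at 0 within {0..1})"
    unfolding p_def by (auto intro!: derivative_eq_intros simp: algebra_simps)
  have dh: "(h has_derivative (\<lambda>v. inner (gh x) v)) (at (p 0) within p ` {0..1})"
    using h(2) x p0 pS unfolding C1_gradient_on_def by (metis has_derivative_subset)
  have dg: "(g has_derivative (\<lambda>u. inner (gh x) (u *\<^sub>R (y - x)))) (at 0 within {0..1})"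
    unfolding g_def using diff_chain_within[OF dp dh] by (simp add: o_def)
  have dg': "(g has_field_derivative inner (gh x) (y - x)) (at 0 within {0..1})"
    unfolding has_field_derivative_def using dg by (simp add: mult.commute[of _ "inner (gh x) (y - x)"])
  have lim: "((\<lambda>u. (g u - g 0) / (u - 0)) \<longlongrightarrow> inner (gh x) (y - x)) (at 0 within {0..1})"
    using dg' by (simp add: has_field_derivative_iff)
  have ev: "eventually (\<lambda>u. (g u - g 0) / (u - 0) \<le> h y - h x) (at 0 within {0..1})"
    unfolding eventually_at_filter
  proof (rule always_eventually, intro allI impI)
    fix u :: real assume "u \<noteq> 0" "u \<in> {0..1}"
    then have u: "0 < u" "u \<le> 1" by auto
    have "g u \<le> (1 - u) * h x + u * h y"
    proof (cases "u = 1")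
      case True then show ?thesis by (simp add: g_def p_def)
    next
      case False
      with u False have "h ((1 - u) *\<^sub>R x + u *\<^sub>R y) < (1 - u) * h x + u * h y"
        using h(1) x y \<open>x \<noteq> y\<close> unfolding strictly_convex_on_def by auto
      then show ?thesis by (simp add: g_def p_def)
    qed
    then have "g u - g 0 \<le> u * (h y - h x)" by (simp add: g_def p_def algebra_simps)
    then show "(g u - g 0) / (u - 0) \<le> h y - h x" using u by (simp add: divide_simps mult.commute)
  qed
  have nb: "at (0::real) within {0..1} \<noteq> bot"
    by (simp add: at_within_Icc_at_right)
  have "inner (gh x) (y - x) \<le> h y - h x"
    by (rule tendsto_upperbound[OF lim ev nb])
  then show ?thesis by (simp add: bregman_def)
qed

lemma chain_C1:
  assumes g: "C1_gradient_on S g dg" and YS: "\<forall>s. Y s \<in> S"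
    and dY: "(Y has_vector_derivative Y') (at t)"
  shows "((\<lambda>s. g (Y s)) has_real_derivative inner (dg (Y t)) Y') (at t)"
proof -
  have d1: "(Y has_derivative (\<lambda>u. u *\<^sub>R Y')) (at t within UNIV)"
    using dY by (simp add: has_vector_derivative_def)
  have d2: "(g has_derivative (\<lambda>v. inner (dg (Y t)) v)) (at (Y t) within Y ` UNIV)"
    using g YS unfolding C1_gradient_on_def by (metis has_derivative_subset image_subset_iff)
  have "((\<lambda>s. g (Y s)) has_derivative (\<lambda>u. inner (dg (Y t)) (u *\<^sub>R Y'))) (at t)"
    using diff_chain_within[OF d1 d2] by (simp add: o_def)
  then show ?thesis unfolding has_field_derivative_def
    by (simp add: mult.commute[of _ "inner (dg (Y t)) Y'"])
qed

theorem proposition3: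
  fixes S :: "'a::euclidean_space set"
    and h f :: "'a \<Rightarrow> real" and gh gf :: "'a \<Rightarrow> 'a"
    and \<mu> :: real and xstar :: 'a
    and \<alpha> \<beta> :: "real \<Rightarrow> real" and X :: "real \<Rightarrow> 'a"
  defines "Z \<equiv> (\<lambda>t. X t + exp (- \<alpha> t) *\<^sub>R vector_derivative X (at t))"
  assumes S: "closed S" "convex S"
    and h: "strictly_convex_on S h" "C1_gradient_on S h gh"
    and mu: "\<mu> > 0"
    and f: "C1_gradient_on S f gf"
    and xstar: "xstar \<in> S" "\<forall>y\<in>S. f xstar \<le> f y"
    and unif: "\<forall>x\<in>S. \<forall>y\<in>S. bregman f gf x y \<ge> \<mu> * bregman h gh x y"
    and ab: "smooth_real \<alpha>" "smooth_real \<beta>" "mono \<beta>" "\<forall>t. deriv \<beta> t \<le> exp (\<alpha> t)"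
    and X: "\<forall>t. X t \<in> S" "\<forall>t. X differentiable (at t)"
    and Z: "\<forall>t. Z t \<in> S" "\<forall>t. Z differentiable (at t)"
      "\<forall>t. (\<lambda>s. gh (Z s)) differentiable (at t)"
    and ode: "\<forall>t. vector_derivative (\<lambda>s. gh (Z s)) (at t) =
        deriv \<beta> t *\<^sub>R gh (X t) - deriv \<beta> t *\<^sub>R gh (Z t) - (exp (\<alpha> t) / \<mu>) *\<^sub>R gf (X t)"
  shows "(\<forall>t. deriv (\<lambda>s. exp (\<beta> s) * \<mu> * bregman h gh xstar (Z s)) t
              \<le> - deriv (\<lambda>s. exp (\<beta> s) * (f (X s) - f xstar)) t)
    \<and> ((\<forall>t. deriv \<beta> t = exp (\<alpha> t)) \<longrightarrow>
        (\<forall>x\<in>S. \<forall>t. deriv (\<lambda>s. exp (\<beta> s) * \<mu> * bregman h gh x (Z s)) t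
              \<le> - deriv (\<lambda>s. exp (\<beta> s) * (f (X s) - f x)) t))
    \<and> antimono (\<lambda>t. exp (\<beta> t) * (\<mu> * bregman h gh xstar (Z t) + f (X t) - f xstar))
    \<and> ((\<forall>t. deriv \<beta> t = exp (\<alpha> t)) \<longrightarrow>
        (\<forall>x\<in>S. antimono (\<lambda>t. exp (\<beta> t) * (\<mu> * bregman h gh x (Z t) + f (X t) - f x))))"
proof -
  have dXv: "\<And>t. (X has_vector_derivative vector_derivative X (at t)) (at t)"
    using X(2) vector_derivative_works by blast
  have dZv: "\<And>t. (Z has_vector_derivative vector_derivative Z (at t)) (at t)"
    using Z(2) vector_derivative_works by blast
  have dGv: "\<And>t. ((\<lambda>s. gh (Z s)) has_vector_derivative vector_derivative (\<lambda>s. gh (Z s)) (at t)) (at t)"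
    using Z(3) vector_derivative_works by blast
  have db: "\<And>t. (\<beta> has_real_derivative deriv \<beta> t) (at t)"
    using ab(2) unfolding smooth_real_def by (metis funpow_0 DERIV_deriv_iff_real_differentiable)
  have bnn: "\<And>t. deriv \<beta> t \<ge> 0"
    using mono_on_imp_deriv_nonneg[of UNIV \<beta>] ab(3) db by auto
  have core: "\<exists>A B. ((\<lambda>s. exp (\<beta> s) * \<mu> * bregman h gh x (Z s)) has_real_derivative A) (at t)
      \<and> ((\<lambda>s. exp (\<beta> s) * (f (X s) - f x)) has_real_derivative B) (at t)
      \<and> A + B \<le> exp (\<beta> t) * (deriv \<beta> t - exp (\<alpha> t)) * (\<mu> * bregman h gh x (X t) + f (X t) - f x)"
    if xS: "x \<in> S" for x t
  proof -
    define X' where "X' = vector_derivative X (at t)"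
    define Z' where "Z' = vector_derivative Z (at t)"
    define G' where "G' = vector_derivative (\<lambda>s. gh (Z s)) (at t)"
    define b where "b = deriv \<beta> t"
    define a where "a = exp (\<alpha> t)"
    define eb where "eb = exp (\<beta> t)"
    have hZ: "((\<lambda>s. h (Z s)) has_real_derivative inner (gh (Z t)) Z') (at t)"
      unfolding Z'_def by (rule chain_C1[OF h(2) Z(1) dZv])
    have fX: "((\<lambda>s. f (X s)) has_real_derivative inner (gf (X t)) X') (at t)"
      unfolding X'_def by (rule chain_C1[OF f X(1) dXv])
    have dG: "((\<lambda>s. gh (Z s)) has_derivative (\<lambda>u. u *\<^sub>R G')) (at t)"
      using dGv unfolding G'_def has_vector_derivative_def .
    have dZ: "(Z has_derivative (\<lambda>u. u *\<^sub>R Z')) (at t)"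
      using dZv unfolding Z'_def has_vector_derivative_def .
    have dI: "((\<lambda>s. inner (gh (Z s)) (x - Z s)) has_derivative
        (\<lambda>u. inner (gh (Z t)) (0 - u *\<^sub>R Z') + inner (u *\<^sub>R G') (x - Z t))) (at t)"
      by (rule has_derivative_inner[OF dG has_derivative_diff[OF has_derivative_const dZ]])
    have dI': "((\<lambda>s. inner (gh (Z s)) (x - Z s)) has_real_derivative
        (inner G' (x - Z t) - inner (gh (Z t)) Z')) (at t)"
      unfolding has_field_derivative_def
      by (rule has_derivative_eq_rhs[OF dI]) (simp add: fun_eq_iff inner_diff_right algebra_simps)
    have dD: "((\<lambda>s. bregman h gh x (Z s)) has_real_derivative - inner G' (x - Z t)) (at t)"
      unfolding bregman_def
      using DERIV_diff[OF DERIV_diff[OF DERIV_const hZ] dI'] by simp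
    have d1: "((\<lambda>s. exp (\<beta> s) * \<mu> * bregman h gh x (Z s)) has_real_derivative
        eb * b * \<mu> * bregman h gh x (Z t) + eb * \<mu> * (- inner G' (x - Z t))) (at t)"
      unfolding eb_def b_def
      by (rule derivative_eq_intros refl db dD | simp add: algebra_simps)+
    have d2: "((\<lambda>s. exp (\<beta> s) * (f (X s) - f x)) has_real_derivative
        eb * b * (f (X t) - f x) + eb * inner (gf (X t)) X') (at t)"
      unfolding eb_def b_def
      by (rule derivative_eq_intros refl db fX | simp add: algebra_simps)+
    have G'eq: "G' = b *\<^sub>R gh (X t) - b *\<^sub>R gh (Z t) - (a / \<mu>) *\<^sub>R gf (X t)"
      using ode unfolding G'_def b_def a_def by blast
    have Zeq: "Z t = X t + (1 / a) *\<^sub>R X'"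
      unfolding Z_def X'_def a_def by (simp add: exp_minus inverse_eq_divide)
    have apos: "a > 0" unfolding a_def by simp
    have ebpos: "eb > 0" unfolding eb_def by simp
    have nZX: "bregman h gh (Z t) (X t) \<ge> 0"
      using bregman_nonneg[OF h Z(1)[rule_format] X(1)[rule_format]] .
    have un: "bregman f gf x (X t) \<ge> \<mu> * bregman h gh x (X t)"
      using unif xS X(1) by blast
    let ?DxX = "bregman h gh x (X t)" and ?DZX = "bregman h gh (Z t) (X t)"
    let ?R = "inner (gf (X t)) (x - X t)"
    have inner1: "inner G' (x - Z t) = b * inner (gh (X t)) (x - Z t) - b * inner (gh (Z t)) (x - Z t)
        - (a / \<mu>) * (?R - (1/a) * inner (gf (X t)) X')"
      unfolding G'eq Zeq by (simp add: inner_diff_left inner_diff_right inner_add_right algebra_simps)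
    have thr: "bregman h gh x (Z t) - (inner (gh (X t)) (x - Z t) - inner (gh (Z t)) (x - Z t))
        = ?DxX - ?DZX"
      unfolding bregman_def by (simp add: inner_diff_right algebra_simps)
    have eq: "eb * b * \<mu> * bregman h gh x (Z t) + eb * \<mu> * (- inner G' (x - Z t))
        + (eb * b * (f (X t) - f x) + eb * inner (gf (X t)) X')
        = eb * (b * \<mu> * (?DxX - ?DZX) + a * ?R + b * (f (X t) - f x))"
      unfolding inner1 thr[symmetric] using apos mu by (simp add: field_simps)
    have R: "a * ?R \<le> a * (f x - f (X t) - \<mu> * ?DxX)"
      using un apos unfolding bregman_def by (intro mult_left_mono) auto
    have bZ: "b * \<mu> * ?DZX \<ge> 0" using bnn nZX mu unfolding b_def by simp
    have "b * \<mu> * (?DxX - ?DZX) + a * ?R + b * (f (X t) - f x)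
        \<le> (b - a) * (\<mu> * ?DxX + f (X t) - f x)"
      using R bZ by (simp add: algebra_simps)
    then have "eb * (b * \<mu> * (?DxX - ?DZX) + a * ?R + b * (f (X t) - f x))
        \<le> eb * ((b - a) * (\<mu> * ?DxX + f (X t) - f x))"
      using ebpos by (intro mult_left_mono) auto
    then show ?thesis using d1 d2 eq unfolding eb_def b_def a_def
      by (intro exI conjI) (auto simp: algebra_simps)
  qed
  have good: "\<exists>A B. ((\<lambda>s. exp (\<beta> s) * \<mu> * bregman h gh x (Z s)) has_real_derivative A) (at t)
      \<and> ((\<lambda>s. exp (\<beta> s) * (f (X s) - f x)) has_real_derivative B) (at t) \<and> A + B \<le> 0"
    if xS: "x \<in> S" and c: "x = xstar \<or> (\<forall>t. deriv \<beta> t = exp (\<alpha> t))" for x t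
  proof -
    obtain A B where AB: "((\<lambda>s. exp (\<beta> s) * \<mu> * bregman h gh x (Z s)) has_real_derivative A) (at t)"
      "((\<lambda>s. exp (\<beta> s) * (f (X s) - f x)) has_real_derivative B) (at t)"
      "A + B \<le> exp (\<beta> t) * (deriv \<beta> t - exp (\<alpha> t)) * (\<mu> * bregman h gh x (X t) + f (X t) - f x)"
      using core[OF xS] by blast
    have "exp (\<beta> t) * (deriv \<beta> t - exp (\<alpha> t)) * (\<mu> * bregman h gh x (X t) + f (X t) - f x) \<le> 0"
      using c
    proof
      assume x: "x = xstar"
      have "bregman h gh x (X t) \<ge> 0" using bregman_nonneg[OF h xS X(1)[rule_format]] .
      then have P: "\<mu> * bregman h gh x (X t) + f (X t) - f x \<ge> 0"
        using mu xstar X(1) x by (metis add_increasing diff_ge_0_iff_ge zero_le_mult_iff less_imp_le)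
      have "exp (\<beta> t) * (deriv \<beta> t - exp (\<alpha> t)) \<le> 0"
        using ab(4) by (simp add: mult_nonneg_nonpos)
      then show ?thesis using P by (simp add: mult_nonpos_nonneg)
    qed simp
    then show ?thesis using AB by (intro exI[of _ A] exI[of _ B] conjI) auto
  qed
  show ?thesis
  proof (intro conjI allI impI ballI)
    fix t
    obtain A B where AB: "((\<lambda>s. exp (\<beta> s) * \<mu> * bregman h gh xstar (Z s)) has_real_derivative A) (at t)"
      "((\<lambda>s. exp (\<beta> s) * (f (X s) - f xstar)) has_real_derivative B) (at t)" "A + B \<le> 0"
      using good[OF xstar(1)] by blast
    then show "deriv (\<lambda>s. exp (\<beta> s) * \<mu> * bregman h gh xstar (Z s)) t
              \<le> - deriv (\<lambda>s. exp (\<beta> s) * (f (X s) - f xstar)) t"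
      using DERIV_imp_deriv[OF AB(1)] DERIV_imp_deriv[OF AB(2)] AB(3) by linarith
  next
    fix x t assume c: "\<forall>t. deriv \<beta> t = exp (\<alpha> t)" and xS: "x \<in> S"
    obtain A B where AB: "((\<lambda>s. exp (\<beta> s) * \<mu> * bregman h gh x (Z s)) has_real_derivative A) (at t)"
      "((\<lambda>s. exp (\<beta> s) * (f (X s) - f x)) has_real_derivative B) (at t)" "A + B \<le> 0"
      using good[OF xS] c by blast
    then show "deriv (\<lambda>s. exp (\<beta> s) * \<mu> * bregman h gh x (Z s)) t
              \<le> - deriv (\<lambda>s. exp (\<beta> s) * (f (X s) - f x)) t"
      using DERIV_imp_deriv[OF AB(1)] DERIV_imp_deriv[OF AB(2)] AB(3) by linarith
  next
    have am: "antimono (\<lambda>t. exp (\<beta> t) * (\<mu> * bregman h gh x (Z t) + f (X t) - f x))"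
      if xS: "x \<in> S" and c: "x = xstar \<or> (\<forall>t. deriv \<beta> t = exp (\<alpha> t))" for x
      unfolding antimono_def
    proof (intro allI impI)
      fix u v :: real assume uv: "u \<le> v"
      have "\<exists>y. ((\<lambda>t. exp (\<beta> t) * (\<mu> * bregman h gh x (Z t) + f (X t) - f x)) has_real_derivative y) (at t) \<and> y \<le> 0" for t
      proof -
        obtain A B where AB: "((\<lambda>s. exp (\<beta> s) * \<mu> * bregman h gh x (Z s)) has_real_derivative A) (at t)"
          "((\<lambda>s. exp (\<beta> s) * (f (X s) - f x)) has_real_derivative B) (at t)" "A + B \<le> 0"
          using good[OF xS c] by blast
        have "((\<lambda>s. exp (\<beta> s) * \<mu> * bregman h gh x (Z s) + exp (\<beta> s) * (f (X s) - f x)) has_real_derivative A + B) (at t)"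
          using DERIV_add[OF AB(1) AB(2)] .
        moreover have "(\<lambda>s. exp (\<beta> s) * \<mu> * bregman h gh x (Z s) + exp (\<beta> s) * (f (X s) - f x))
            = (\<lambda>t. exp (\<beta> t) * (\<mu> * bregman h gh x (Z t) + f (X t) - f x))"
          by (simp add: fun_eq_iff algebra_simps)
        ultimately show ?thesis using AB(3) by auto
      qed
      then show "exp (\<beta> v) * (\<mu> * bregman h gh x (Z v) + f (X v) - f x)
          \<le> exp (\<beta> u) * (\<mu> * bregman h gh x (Z u) + f (X u) - f x)"
        by (intro DERIV_nonpos_imp_nonincreasing[OF uv]) blast
    qed
    show "antimono (\<lambda>t. exp (\<beta> t) * (\<mu> * bregman h gh xstar (Z t) + f (X t) - f xstar))"
      using am xstar(1) by blast
    fix x assume "\<forall>t. deriv \<beta> t = exp (\<alpha> t)" "x \<in> S"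
    then show "antimono (\<lambda>t. exp (\<beta> t) * (\<mu> * bregman h gh x (Z t) + f (X t) - f x))"
      using am by blast
  qed
qed

end
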